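(* Let $d\ge2$, $s_n=2(\log n)^2$, $s_{n,+}=(3s_n)^d$ and $W_{s_{n,+}}=[-s_{n,+}^{1/d}/2,s_{n,+}^{1/d}/2]^d$. If $\varepsilon>0$ is sufficiently small, then $$\Big|\big\{(x_0,\dots,x_3)\in W_{s_{n,+}}^4:\ |d_{23}-d_{01}|\vee|d_{03}-d_{12}|\le n^{-1+\varepsilon}\big\}\Big|\in O(n^{-1})\quad(n\to\infty),$$ where $d_{ij}=|x_i-x_j|/2$ and $|\cdot|$ denotes Lebesgue measure on $(\mathbb R^d)^4$. *)

theory Defs
  imports "HOL-Analysis.Analysis" "HOL-Library.Landau_Symbols"
begin

definition s_seq :: "nat \<Rightarrow> real" where
  "s_seq n = 2 * (ln (real n))^2"

definition s_plus :: "nat \<Rightarrow> nat \<Rightarrow> real" where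
  "s_plus d n = (3 * s_seq n) ^ d"

definition cube_W :: "real \<Rightarrow> (real ^ 'n) set" where
  "cube_W s = {x. \<forall>i. \<bar>x $ i\<bar> \<le> root CARD('n) s / 2}"

definition halfdist :: "real ^ 'n \<Rightarrow> real ^ 'n \<Rightarrow> real" where
  "halfdist x y = norm (x - y) / 2"

definition bad_set :: "nat \<Rightarrow> real \<Rightarrow> ((real^'n) \<times> (real^'n) \<times> (real^'n) \<times> (real^'n)) set" where
  "bad_set n \<epsilon> = {(x0 :: real^'n, x1 :: real^'n, x2 :: real^'n, x3 :: real^'n).
      x0 \<in> cube_W (s_plus CARD('n) n) \<and> x1 \<in> cube_W (s_plus CARD('n) n) \<and>
      x2 \<in> cube_W (s_plus CARD('n) n) \<and> x3 \<in> cube_W (s_plus CARD('n) n) \<and>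
      max \<bar>halfdist x2 x3 - halfdist x0 x1\<bar> \<bar>halfdist x0 x3 - halfdist x1 x2\<bar>
        \<le> real n powr (-1 + \<epsilon>)}"

end

theory Submission
  imports Defs
begin
lemma sum_Basis_inner:
  fixes f :: "'a::euclidean_space \<Rightarrow> real"
  shows "(\<Sum>b\<in>Basis. f b *\<^sub>R b) \<bullet> s = (\<Sum>b\<in>Basis. f b * (b \<bullet> s))"
  by (simp add: inner_sum_left)

lemma sum_Basis_comp:
  fixes f :: "'a::euclidean_space \<Rightarrow> real"
  assumes "i \<in> Basis"
  shows "(\<Sum>b\<in>Basis. f b *\<^sub>R b) \<bullet> i = f i"
  using assms by (simp add: inner_sum_left inner_Basis if_distrib cong: if_cong)

interpretation lbprod: product_sigma_finite "\<lambda>_::'a. lborel :: real measure"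
  by standard

lemma slab_gen:
  fixes s :: "'a::euclidean_space"
  assumes j: "j \<in> Basis" and sj: "s \<bullet> j \<noteq> 0" and h: "h \<ge> 0" and r: "r \<ge> 0"
  shows "emeasure lborel {x. (\<forall>b\<in>Basis. \<bar>x \<bullet> b\<bar> \<le> r) \<and> \<bar>x \<bullet> s - c\<bar> \<le> h}
     \<le> ennreal ((2 * r) ^ (DIM('a) - 1) * (2 * h / \<bar>s \<bullet> j\<bar>))"
proof -
  define A where "A = {x. (\<forall>b\<in>Basis. \<bar>x \<bullet> b\<bar> \<le> r) \<and> \<bar>x \<bullet> s - c\<bar> \<le> h}"
  have Aclosed: "closed A" unfolding A_def Collect_conj_eq Collect_ball_eq
    by (intro closed_Int closed_INT ballI closed_Collect_le continuous_intros)
  hence Ab[measurable]: "A \<in> sets borel" by (simp add: borel_closed)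
  define B where "B = Basis - {j::'a}"
  have BB: "Basis = insert j B" "finite B" "j \<notin> B" using j by (auto simp: B_def)
  define \<Phi> where "\<Phi> = (\<lambda>f::'a\<Rightarrow>real. \<Sum>b\<in>Basis. f b *\<^sub>R b)"
  have \<Phi>m[measurable]: "\<Phi> \<in> borel_measurable (Pi\<^sub>M Basis (\<lambda>_. lborel))"
    unfolding \<Phi>_def by measurable
  define G where "G = (\<lambda>f. indicator A (\<Phi> f) :: ennreal)"
  have Gm: "G \<in> borel_measurable (Pi\<^sub>M (insert j B) (\<lambda>_. lborel))"
    unfolding G_def BB(1)[symmetric] by measurable
  have "emeasure lborel A = (\<integral>\<^sup>+x. indicator A x \<partial>lborel)" by simp
  also have "\<dots> = (\<integral>\<^sup>+f. G f \<partial>(Pi\<^sub>M Basis (\<lambda>_. lborel)))"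
    unfolding G_def \<Phi>_def
    apply (subst lborel_eq)
    apply (subst nn_integral_distr)
    using \<Phi>m unfolding \<Phi>_def by auto
  also have "\<dots> = (\<integral>\<^sup>+ x. (\<integral>\<^sup>+ y. G (x(j := y)) \<partial>lborel) \<partial>(Pi\<^sub>M B (\<lambda>_. lborel)))"
    unfolding BB(1) by (rule lbprod.product_nn_integral_insert[OF BB(2,3) Gm])
  also have "\<dots> \<le> (\<integral>\<^sup>+ x. ennreal (2 * h / \<bar>s \<bullet> j\<bar>) * indicator (Pi\<^sub>E B (\<lambda>_. {-r..r})) x \<partial>(Pi\<^sub>M B (\<lambda>_. lborel)))"
  proof (rule nn_integral_mono)
    fix x assume x: "x \<in> space (Pi\<^sub>M B (\<lambda>_. lborel :: real measure))"
    show "(\<integral>\<^sup>+ y. G (x(j := y)) \<partial>lborel) \<le> ennreal (2 * h / \<bar>s \<bullet> j\<bar>) * indicator (Pi\<^sub>E B (\<lambda>_. {-r..r})) x"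
    proof (cases "x \<in> Pi\<^sub>E B (\<lambda>_. {-r..r})")
      case False
      then obtain b where b: "b \<in> B" "x b \<notin> {-r..r}" using x False unfolding space_PiM PiE_def Pi_def by blast
      have "G (x(j := y)) = 0" for y
      proof -
        have "\<Phi> (x(j := y)) \<bullet> b = x b" using b BB unfolding \<Phi>_def
          by (subst sum_Basis_comp) auto
        hence "\<not> \<bar>\<Phi> (x(j := y)) \<bullet> b\<bar> \<le> r" using b(2) by auto
        moreover have "b \<in> Basis" using b BB by auto
        ultimately have "\<Phi> (x(j := y)) \<notin> A" unfolding A_def by blast
        thus ?thesis unfolding G_def by simp
      qed
      thus ?thesis by simp
    next
      case True
      define K where "K = (\<Sum>b\<in>B. x b * (b \<bullet> s))"
      define m where "m = (c - K) / (s \<bullet> j)"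
      define h' where "h' = h / \<bar>s \<bullet> j\<bar>"
      have "G (x(j := y)) \<le> indicator {m - h' .. m + h'} y" for y
      proof -
        have "\<Phi> (x(j := y)) \<bullet> s = (\<Sum>b\<in>insert j B. (x(j := y)) b * (b \<bullet> s))"
          unfolding \<Phi>_def sum_Basis_inner BB(1)[symmetric] ..
        also have "\<dots> = y * (j \<bullet> s) + (\<Sum>b\<in>B. (x(j := y)) b * (b \<bullet> s))"
          by (subst sum.insert[OF BB(2,3)]) simp
        also have "(\<Sum>b\<in>B. (x(j := y)) b * (b \<bullet> s)) = K"
          unfolding K_def using BB by (intro sum.cong) auto
        finally have "\<Phi> (x(j := y)) \<bullet> s = y * (j \<bullet> s) + K" .
        hence eq: "\<Phi> (x(j := y)) \<bullet> s - c = (s \<bullet> j) * (y - m)"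
          using sj by (simp add: m_def field_simps inner_commute)
        show ?thesis
        proof (cases "\<Phi> (x(j := y)) \<in> A")
          case True
          hence "\<bar>s \<bullet> j\<bar> * \<bar>y - m\<bar> \<le> h" unfolding A_def using eq by (simp add: abs_mult)
          hence "\<bar>y - m\<bar> \<le> h'" using sj by (simp add: h'_def field_simps)
          thus ?thesis by (simp add: G_def indicator_def abs_le_iff)
        qed (simp add: G_def)
      qed
      hence "(\<integral>\<^sup>+ y. G (x(j := y)) \<partial>lborel) \<le> (\<integral>\<^sup>+ y. indicator {m - h' .. m + h'} y \<partial>lborel)"
        by (intro nn_integral_mono) auto
      also have "\<dots> = ennreal (2 * h')"
        using h sj by (simp add: h'_def)
      finally show ?thesis using True by (simp add: h'_def)
    qed
  qed
  also have "\<dots> = ennreal (2 * h / \<bar>s \<bullet> j\<bar>) * emeasure (Pi\<^sub>M B (\<lambda>_. lborel)) (Pi\<^sub>E B (\<lambda>_. {-r..r}))"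
    by (rule nn_integral_cmult_indicator) (auto intro: sets_PiM_I_finite BB(2))
  also have "emeasure (Pi\<^sub>M B (\<lambda>_. lborel)) (Pi\<^sub>E B (\<lambda>_. {-r..r})) = (\<Prod>i\<in>B. emeasure lborel {-r..r})"
    by (rule lbprod.emeasure_PiM) (auto simp: BB)
  also have "\<dots> = ennreal ((2 * r) ^ (DIM('a) - 1))"
  proof -
    have "card B = DIM('a) - 1" unfolding B_def using j by (simp add: card_Diff_singleton)
    thus ?thesis using r by (simp add: ennreal_power)
  qed
  also have "ennreal (2 * h / \<bar>s \<bullet> j\<bar>) * ennreal ((2 * r) ^ (DIM('a) - 1))
      = ennreal ((2 * r) ^ (DIM('a) - 1) * (2 * h / \<bar>s \<bullet> j\<bar>))"
    using h r by (simp add: ennreal_mult'[symmetric] mult.commute)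
  finally show ?thesis unfolding A_def .
qed


definition cube :: "real \<Rightarrow> 'a::euclidean_space set" where
  "cube r = {x. \<forall>b\<in>Basis. \<bar>x \<bullet> b\<bar> \<le> r}"

lemma closed_cube: "closed (cube r)"
  unfolding cube_def Collect_ball_eq
  by (intro closed_INT ballI closed_Collect_le continuous_intros)

lemma cube_borel[measurable]: "cube r \<in> sets borel"
  by (simp add: closed_cube borel_closed)

lemma cube_mono: "r \<le> r' \<Longrightarrow> cube r \<subseteq> cube r'"
  unfolding cube_def by force

lemma emeasure_cube:
  assumes "r \<ge> 0"
  shows "emeasure lborel (cube r :: 'a::euclidean_space set) = ennreal ((2 * r) ^ DIM('a))"
proof -
  have "cube r = cbox (- (r *\<^sub>R One)) (r *\<^sub>R One :: 'a)"
    unfolding cube_def cbox_def by (auto simp: abs_le_iff)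
  also have "emeasure lborel \<dots> = ennreal ((2 * r) ^ DIM('a))"
  proof -
    have "(\<Prod>b\<in>Basis. (r *\<^sub>R (One::'a) - (- (r *\<^sub>R One))) \<bullet> b) = (\<Prod>b\<in>(Basis::'a set). 2 * r)"
      by (rule prod.cong[OF refl]) (simp add: inner_diff_left inner_add_left)
    thus ?thesis using assms by (simp add: emeasure_lborel_cbox_eq)
  qed
  finally show ?thesis .
qed


lemma slab2:
  fixes s :: "'a::euclidean_space"
  fixes h r c :: real
  assumes s: "s \<noteq> 0" and h: "h \<ge> 0" and r: "r \<ge> 0"
  shows "emeasure lborel {x. x \<in> cube r \<and> \<bar>x \<bullet> s - c\<bar> \<le> h}
     \<le> ennreal ((2 * r) ^ (DIM('a) - 1) * (2 * h * real DIM('a) / norm s))"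
proof -
  obtain j where j: "j \<in> Basis" "\<forall>b\<in>Basis. \<bar>s \<bullet> b\<bar> \<le> \<bar>s \<bullet> j\<bar>"
  proof -
    have "finite ((\<lambda>b. \<bar>s \<bullet> b\<bar>) ` (Basis::'a set))" "(\<lambda>b. \<bar>s \<bullet> b\<bar>) ` (Basis::'a set) \<noteq> {}" by auto
    from Max_in[OF this] obtain j where "j \<in> Basis" "\<bar>s \<bullet> j\<bar> = Max ((\<lambda>b. \<bar>s \<bullet> b\<bar>) ` Basis)"
      by (metis (no_types, lifting) imageE)
    moreover have "\<forall>b\<in>Basis. \<bar>s \<bullet> b\<bar> \<le> Max ((\<lambda>b. \<bar>s \<bullet> b\<bar>) ` Basis)" by auto
    ultimately show ?thesis using that by metis
  qed
  have "norm s \<le> (\<Sum>b\<in>Basis. \<bar>s \<bullet> b\<bar>)" by (rule norm_le_l1)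
  also have "\<dots> \<le> (\<Sum>b\<in>(Basis::'a set). \<bar>s \<bullet> j\<bar>)" using j by (intro sum_mono) auto
  also have "\<dots> = real DIM('a) * \<bar>s \<bullet> j\<bar>" by simp
  finally have ns: "norm s \<le> real DIM('a) * \<bar>s \<bullet> j\<bar>" .
  have nsp: "norm s > 0" using s by simp
  hence sj: "s \<bullet> j \<noteq> 0" using ns by auto
  have "emeasure lborel {x. x \<in> cube r \<and> \<bar>x \<bullet> s - c\<bar> \<le> h}
     \<le> ennreal ((2 * r) ^ (DIM('a) - 1) * (2 * h / \<bar>s \<bullet> j\<bar>))"
    using slab_gen[OF j(1) sj h r, of c] unfolding cube_def by simp
  also have "\<dots> \<le> ennreal ((2 * r) ^ (DIM('a) - 1) * (2 * h * real DIM('a) / norm s))"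
  proof (intro ennreal_leI mult_left_mono)
    show "2 * h / \<bar>s \<bullet> j\<bar> \<le> 2 * h * real DIM('a) / norm s"
      using ns nsp sj h by (simp add: field_simps mult_left_mono)
  qed (use r in simp)
  finally show ?thesis .
qed

lemma norm_diff_cube:
  fixes x y :: "'a::euclidean_space" and r :: real
  assumes "x \<in> cube r" "y \<in> cube r"
  shows "norm (x - y) \<le> 2 * real DIM('a) * r"
proof -
  have "norm (x - y) \<le> (\<Sum>b\<in>Basis. \<bar>(x - y) \<bullet> b\<bar>)" by (rule norm_le_l1)
  also have "\<dots> \<le> (\<Sum>b\<in>(Basis::'a set). 2 * r)"
  proof (intro sum_mono)
    fix b :: 'a assume b: "b \<in> Basis"
    have "\<bar>x \<bullet> b\<bar> \<le> r" "\<bar>y \<bullet> b\<bar> \<le> r" using assms b by (auto simp: cube_def)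
    thus "\<bar>(x - y) \<bullet> b\<bar> \<le> 2 * r" by (simp add: inner_diff_left)
  qed
  finally show ?thesis by simp
qed

lemma geom_incl:
  fixes x0 x1 x2 x3 :: "'a::euclidean_space" and r w :: real
  assumes c: "x0 \<in> cube r" "x1 \<in> cube r" "x2 \<in> cube r" "x3 \<in> cube r"
    and g1: "\<bar>norm (x2 - x3) - norm (x0 - x1)\<bar> \<le> w"
    and g2: "\<bar>norm (x0 - x3) - norm (x1 - x2)\<bar> \<le> w"
  defines "s \<equiv> (x1 - x0 - x2) + x3"
  defines "M \<equiv> 2 * real DIM('a) * r"
  shows "\<bar>x1 \<bullet> s - (x0 \<bullet> s + s \<bullet> s / 2)\<bar> \<le> w * M"
    and "\<bar>x2 \<bullet> s - x0 \<bullet> s\<bar> \<le> 2 * w * M"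
proof -
  define u where "u = x1 - x0"
  define v where "v = x3 - x2"
  define p where "p = x2 - x0"
  have sdef: "s = u + v" unfolding s_def u_def v_def by (simp add: algebra_simps)
  have nu: "norm u \<le> M" unfolding u_def M_def using norm_diff_cube[OF c(2,1)] .
  have nv: "norm v \<le> M" unfolding v_def M_def using norm_diff_cube[OF c(4,3)] .
  have n1: "norm (p + v) \<le> M" unfolding p_def v_def M_def using norm_diff_cube[OF c(4,1)] by simp
  have n2: "norm (u - p) \<le> M" unfolding p_def u_def M_def using norm_diff_cube[OF c(2,3)] by simp
  have w0: "w \<ge> 0" using g1 by linarith
  have g1': "\<bar>norm v - norm u\<bar> \<le> w" using g1 unfolding u_def v_def by (simp add: norm_minus_commute)
  have g2': "\<bar>norm (p + v) - norm (u - p)\<bar> \<le> w" using g2 unfolding u_def v_def p_def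
    by (simp add: norm_minus_commute algebra_simps)
  have sq: "\<bar>a\<^sup>2 - b\<^sup>2\<bar> \<le> w * (2 * M)" if "\<bar>a - b\<bar> \<le> w" "0 \<le> a" "a \<le> M" "0 \<le> b" "b \<le> M" for a b :: real
  proof -
    have "a\<^sup>2 - b\<^sup>2 = (a - b) * (a + b)" by (simp add: power2_eq_square algebra_simps)
    hence "\<bar>a\<^sup>2 - b\<^sup>2\<bar> = \<bar>a - b\<bar> * \<bar>a + b\<bar>" by (simp add: abs_mult)
    hence "\<bar>a\<^sup>2 - b\<^sup>2\<bar> = \<bar>a - b\<bar> * (a + b)" using that by simp
    also have "\<dots> \<le> w * (2 * M)" using that w0 by (intro mult_mono) auto
    finally show ?thesis .
  qed
  have A: "\<bar>(norm v)\<^sup>2 - (norm u)\<^sup>2\<bar> \<le> w * (2 * M)" using sq[OF g1'] nu nv by simp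
  have B: "\<bar>(norm (p + v))\<^sup>2 - (norm (u - p))\<^sup>2\<bar> \<le> w * (2 * M)" using sq[OF g2'] n1 n2 by simp
  have e1: "x1 \<bullet> s - (x0 \<bullet> s + s \<bullet> s / 2) = ((norm u)\<^sup>2 - (norm v)\<^sup>2) / 2"
    unfolding power2_norm_eq_inner sdef using u_def
    by (simp add: u_def inner_add_left inner_add_right inner_diff_left inner_diff_right inner_commute field_simps)
  have e2: "(norm (p + v))\<^sup>2 - (norm (u - p))\<^sup>2 = 2 * (p \<bullet> s) + ((norm v)\<^sup>2 - (norm u)\<^sup>2)"
    unfolding power2_norm_eq_inner sdef
    by (simp add: inner_add_left inner_add_right inner_diff_left inner_diff_right inner_commute algebra_simps)
  show "\<bar>x1 \<bullet> s - (x0 \<bullet> s + s \<bullet> s / 2)\<bar> \<le> w * M"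
    using A unfolding e1 by simp
  have "x2 \<bullet> s - x0 \<bullet> s = p \<bullet> s" unfolding p_def by (simp add: inner_diff_left)
  moreover have "\<bar>2 * (p \<bullet> s)\<bar> \<le> 4 * w * M" using A B e2 by linarith
  ultimately show "\<bar>x2 \<bullet> s - x0 \<bullet> s\<bar> \<le> 2 * w * M" by simp
qed


lemma emeasure_le_nn:
  assumes "\<And>z. indicator A z \<le> g z" and "g \<in> borel_measurable M"
  shows "emeasure M A \<le> integral\<^sup>N M g"
proof (cases "A \<in> sets M")
  case True
  hence "emeasure M A = (\<integral>\<^sup>+z. indicator A z \<partial>M)" by simp
  also have "\<dots> \<le> integral\<^sup>N M g" using assms(1) by (intro nn_integral_mono) auto
  finally show ?thesis .
qed (simp add: emeasure_notin_sets)

lemma nn_transl: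
  fixes f :: "'a::euclidean_space \<Rightarrow> ennreal"
  assumes [measurable]: "f \<in> borel_measurable borel"
  shows "(\<integral>\<^sup>+x. f (c + x) \<partial>lborel) = (\<integral>\<^sup>+x. f x \<partial>lborel)"
proof -
  have "(\<integral>\<^sup>+x. f x \<partial>lborel) = (\<integral>\<^sup>+x. f x \<partial>(distr lborel borel ((+) c)))"
    by (simp add: lborel_distr_plus)
  also have "\<dots> = (\<integral>\<^sup>+x. f (c + x) \<partial>lborel)"
    by (subst nn_integral_distr) auto
  finally show ?thesis ..
qed

lemma nn_fst:
  fixes f :: "'a::euclidean_space \<times> 'b::euclidean_space \<Rightarrow> ennreal"
  assumes "f \<in> borel_measurable (lborel \<Otimes>\<^sub>M lborel)"
  shows "integral\<^sup>N (lborel \<Otimes>\<^sub>M lborel) f = (\<integral>\<^sup>+x. \<integral>\<^sup>+y. f (x, y) \<partial>lborel \<partial>lborel)"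
  by (rule lborel.nn_integral_fst[symmetric, OF assms])

lemma slab_closed: "closed {x. x \<in> cube r \<and> \<bar>x \<bullet> s - c\<bar> \<le> h}"
proof -
  have "{x. x \<in> cube r \<and> \<bar>x \<bullet> s - c\<bar> \<le> h} = cube r \<inter> {x. \<bar>x \<bullet> s - c\<bar> \<le> h}" by auto
  thus ?thesis by (simp add: closed_Int closed_cube closed_Collect_le continuous_intros)
qed

lemma slab_sets[measurable]: "{x. x \<in> cube r \<and> \<bar>x \<bullet> s - c\<bar> \<le> h} \<in> sets borel"
  by (rule borel_closed[OF slab_closed])

lemma slab_le_cube:
  fixes r :: real and s :: "'a::euclidean_space"
  assumes "r \<ge> 0"
  shows "emeasure lborel {x. x \<in> cube r \<and> \<bar>x \<bullet> s - c\<bar> \<le> h} \<le> ennreal ((2 * r) ^ DIM('a::euclidean_space))"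
proof -
  have "emeasure lborel {x. x \<in> cube r \<and> \<bar>x \<bullet> s - c\<bar> \<le> h} \<le> emeasure lborel (cube r :: 'a set)"
    by (rule emeasure_mono) auto
  thus ?thesis using emeasure_cube[OF assms, where 'a='a] by simp
qed


lemma sec_bound:
  fixes r w \<sigma>1 \<sigma>2 :: real and x0 s :: "'a::euclidean_space"
  assumes r: "r \<ge> 0" and w: "w \<ge> 0" and \<sigma>1: "\<sigma>1 > 0" and \<sigma>2: "\<sigma>2 > 0"
  defines "D \<equiv> DIM('a)"
  defines "M \<equiv> 2 * real D * r"
  defines "P \<equiv> (2*r)^D * (2*r)^D"
  defines "Q \<equiv> ((2*r)^(D-1) * (2*(w*M)*real D)) * ((2*r)^(D-1) * (2*(2*w*M)*real D))"
  shows "indicator (cube (4*r)) s *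
      (emeasure lborel {x::'a. x \<in> cube r \<and> \<bar>x \<bullet> s - (x0 \<bullet> s + s \<bullet> s / 2)\<bar> \<le> w * M} *
       emeasure lborel {x::'a. x \<in> cube r \<and> \<bar>x \<bullet> s - x0 \<bullet> s\<bar> \<le> 2 * w * M})
    \<le> ennreal P * indicator (cube \<sigma>1) s + ennreal (Q / \<sigma>1\<^sup>2) * indicator (cube \<sigma>2) s
       + ennreal (Q / \<sigma>2\<^sup>2) * indicator (cube (4*r)) s"
  (is "indicator _ s * (?A * ?B) \<le> ?H")
proof (cases "s \<in> cube (4*r)")
  case False thus ?thesis by simp
next
  case s4: True
  have M0: "M \<ge> 0" using r by (simp add: M_def)
  have Q0: "Q \<ge> 0" unfolding Q_def using r w M0 by simp
  show ?thesis
  proof (cases "s \<in> cube \<sigma>1")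
    case True
    have "?A * ?B \<le> ennreal ((2*r)^D) * ennreal ((2*r)^D)"
      using slab_le_cube[OF r, of s "x0 \<bullet> s + s \<bullet> s / 2" "w * M"] slab_le_cube[OF r, of s "x0 \<bullet> s" "2 * w * M"]
      unfolding D_def by (intro mult_mono) auto
    also have "\<dots> = ennreal P" using r by (simp add: P_def ennreal_mult''[symmetric])
    finally have "?A * ?B \<le> ennreal P" .
    hence "indicator (cube (4*r)) s * (?A * ?B) \<le> ennreal P * indicator (cube \<sigma>1) s"
      using s4 True by simp
    also have "\<dots> \<le> ?H" by (intro add_increasing2) auto
    finally show ?thesis .
  next
    case False
    then obtain b :: 'a where b: "b \<in> Basis" "\<bar>s \<bullet> b\<bar> > \<sigma>1" unfolding cube_def by force
    have ns1: "norm s > \<sigma>1" using Basis_le_norm[OF b(1), of s] b(2) by linarith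
    hence s0: "s \<noteq> 0" using \<sigma>1 by auto
    have ns: "norm s > 0" using s0 by simp
    have "?A * ?B \<le> ennreal ((2*r)^(D-1) * (2*(w*M)*real D / norm s)) * ennreal ((2*r)^(D-1) * (2*(2*w*M)*real D / norm s))"
      unfolding D_def by (intro mult_mono slab2 s0 r) (use w M0 in auto)
    also have "\<dots> = ennreal (Q / (norm s)\<^sup>2)"
      using r w M0 ns by (simp add: Q_def ennreal_mult''[symmetric] power2_eq_square field_simps)
    finally have AB: "?A * ?B \<le> ennreal (Q / (norm s)\<^sup>2)" .
    show ?thesis
    proof (cases "s \<in> cube \<sigma>2")
      case True
      have "Q / (norm s)\<^sup>2 \<le> Q / \<sigma>1\<^sup>2" using Q0 ns1 \<sigma>1
        by (intro divide_left_mono power_strict_mono[THEN less_imp_le] mult_pos_pos) auto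
      hence "?A * ?B \<le> ennreal (Q / \<sigma>1\<^sup>2)" using AB by (meson ennreal_leI order_trans)
      hence "indicator (cube (4*r)) s * (?A * ?B) \<le> ennreal (Q / \<sigma>1\<^sup>2) * indicator (cube \<sigma>2) s"
        using s4 True by simp
      also have "\<dots> \<le> ?H" by (intro add_increasing2 add_increasing) auto
      finally show ?thesis .
    next
      case False
      then obtain b :: 'a where b: "b \<in> Basis" "\<bar>s \<bullet> b\<bar> > \<sigma>2" unfolding cube_def by force
      have ns2: "norm s > \<sigma>2" using Basis_le_norm[OF b(1), of s] b(2) by linarith
      have "Q / (norm s)\<^sup>2 \<le> Q / \<sigma>2\<^sup>2" using Q0 ns2 \<sigma>2
        by (intro divide_left_mono power_strict_mono[THEN less_imp_le] mult_pos_pos) auto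
      hence "?A * ?B \<le> ennreal (Q / \<sigma>2\<^sup>2)" using AB by (meson ennreal_leI order_trans)
      hence "indicator (cube (4*r)) s * (?A * ?B) \<le> ennreal (Q / \<sigma>2\<^sup>2) * indicator (cube (4*r)) s"
        using s4 by simp
      also have "\<dots> \<le> ?H" by (intro add_increasing) auto
      finally show ?thesis .
    qed
  qed
qed


lemma main_geom:
  fixes r w \<sigma>1 \<sigma>2 :: real
  assumes r: "r \<ge> 0" and w: "w \<ge> 0" and \<sigma>1: "\<sigma>1 > 0" and \<sigma>2: "\<sigma>2 > 0"
  defines "D \<equiv> DIM('a::euclidean_space)"
  defines "M \<equiv> 2 * real D * r"
  defines "P \<equiv> (2*r)^D * (2*r)^D"
  defines "Q \<equiv> ((2*r)^(D-1) * (2*(w*M)*real D)) * ((2*r)^(D-1) * (2*(2*w*M)*real D))"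
  assumes AE: "A \<subseteq> {(x0::'a, x1::'a, x2::'a, x3::'a). x0 \<in> cube r \<and> x1 \<in> cube r \<and> x2 \<in> cube r \<and> x3 \<in> cube r \<and>
       \<bar>norm (x2 - x3) - norm (x0 - x1)\<bar> \<le> w \<and> \<bar>norm (x0 - x3) - norm (x1 - x2)\<bar> \<le> w}"
  shows "emeasure lborel A
   \<le> ennreal ((2*r)^D * (P*(2*\<sigma>1)^D + Q/\<sigma>1\<^sup>2*(2*\<sigma>2)^D + Q/\<sigma>2\<^sup>2*(8*r)^D))"
proof -
  define h1 where "h1 = w * M"
  define h2 where "h2 = 2 * w * M"
  have M0: "M \<ge> 0" using r by (simp add: M_def)
  have Q0: "Q \<ge> 0" unfolding Q_def using r w M0 by simp
  have P0: "P \<ge> 0" unfolding P_def using r by simp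
  define H where "H = (\<lambda>s::'a. ennreal P * indicator (cube \<sigma>1) s + ennreal (Q / \<sigma>1\<^sup>2) * indicator (cube \<sigma>2) s
       + ennreal (Q / \<sigma>2\<^sup>2) * indicator (cube (4*r)) s)"
  define SA where "SA = (\<lambda>x0 s. {x::'a. x \<in> cube r \<and> \<bar>x \<bullet> s - (x0 \<bullet> s + s \<bullet> s / 2)\<bar> \<le> h1})"
  define SB where "SB = (\<lambda>x0 s. {x::'a. x \<in> cube r \<and> \<bar>x \<bullet> s - x0 \<bullet> s\<bar> \<le> h2})"
  define \<Psi> where "\<Psi> = (\<lambda>z::'a\<times>'a\<times>'a\<times>'a. (if fst z \<in> cube r \<and> snd (snd (snd z)) \<in> cube (4*r) \<and>
      fst (snd z) \<in> cube r \<and>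
      \<bar>fst (snd z) \<bullet> snd (snd (snd z)) - (fst z \<bullet> snd (snd (snd z)) + snd (snd (snd z)) \<bullet> snd (snd (snd z)) / 2)\<bar> \<le> h1 \<and>
      fst (snd (snd z)) \<in> cube r \<and>
      \<bar>fst (snd (snd z)) \<bullet> snd (snd (snd z)) - fst z \<bullet> snd (snd (snd z))\<bar> \<le> h2 then 1 else 0 :: ennreal))"
  have \<Psi>m[measurable]: "\<Psi> \<in> borel_measurable (lborel \<Otimes>\<^sub>M (lborel \<Otimes>\<^sub>M (lborel \<Otimes>\<^sub>M lborel)))"
    unfolding \<Psi>_def by measurable
  have \<Psi>eq: "\<Psi> (x0, x1, x2, s) = (indicator (cube r) x0 * indicator (cube (4*r)) s * indicator (SA x0 s) x1) * indicator (SB x0 s) x2"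
    for x0 x1 x2 s by (simp add: \<Psi>_def SA_def SB_def indicator_def)
  define E where "E = {(x0::'a, x1::'a, x2::'a, x3::'a). x0 \<in> cube r \<and> x1 \<in> cube r \<and> x2 \<in> cube r \<and> x3 \<in> cube r \<and>
       \<bar>norm (x2 - x3) - norm (x0 - x1)\<bar> \<le> w \<and> \<bar>norm (x0 - x3) - norm (x1 - x2)\<bar> \<le> w}"
  define g where "g = (\<lambda>z::'a\<times>'a\<times>'a\<times>'a. \<Psi> (fst z, fst (snd z), fst (snd (snd z)),
       (fst (snd z) - fst z - fst (snd (snd z))) + snd (snd (snd z))))"
  have gm: "g \<in> borel_measurable (lborel \<Otimes>\<^sub>M (lborel \<Otimes>\<^sub>M (lborel \<Otimes>\<^sub>M lborel)))"
    unfolding g_def by measurable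
  have L4: "(lborel :: ('a\<times>'a\<times>'a\<times>'a) measure) = lborel \<Otimes>\<^sub>M (lborel \<Otimes>\<^sub>M (lborel \<Otimes>\<^sub>M lborel))"
    by (simp only: lborel_prod)
  have "emeasure lborel A \<le> integral\<^sup>N lborel g"
  proof (rule emeasure_le_nn)
    show "g \<in> borel_measurable lborel" unfolding L4 by (rule gm)
    fix z :: "'a\<times>'a\<times>'a\<times>'a"
    show "indicator A z \<le> g z"
    proof (cases "z \<in> A")
      case False thus ?thesis by simp
    next
      case TA: True
      hence True: "z \<in> E" using AE unfolding E_def by blast
      obtain x0 x1 x2 x3 where z: "z = (x0, x1, x2, x3)" by (cases z) auto
      have c: "x0 \<in> cube r" "x1 \<in> cube r" "x2 \<in> cube r" "x3 \<in> cube r"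
        and g1: "\<bar>norm (x2 - x3) - norm (x0 - x1)\<bar> \<le> w" and g2: "\<bar>norm (x0 - x3) - norm (x1 - x2)\<bar> \<le> w"
        using True by (auto simp: E_def z)
      define s where "s = (x1 - x0 - x2) + x3"
      have "s \<in> cube (4*r)" unfolding cube_def mem_Collect_eq
      proof
        fix b :: 'a assume b: "b \<in> Basis"
        have "\<bar>x0 \<bullet> b\<bar> \<le> r" "\<bar>x1 \<bullet> b\<bar> \<le> r" "\<bar>x2 \<bullet> b\<bar> \<le> r" "\<bar>x3 \<bullet> b\<bar> \<le> r"
          using c b by (auto simp: cube_def)
        moreover have "s \<bullet> b = x1 \<bullet> b - x0 \<bullet> b - x2 \<bullet> b + x3 \<bullet> b"
          by (simp add: s_def inner_add_left inner_diff_left)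
        ultimately show "\<bar>s \<bullet> b\<bar> \<le> 4 * r" unfolding abs_le_iff by linarith
      qed
      moreover have "\<bar>x1 \<bullet> s - (x0 \<bullet> s + s \<bullet> s / 2)\<bar> \<le> h1"
        using geom_incl(1)[OF c g1 g2] unfolding s_def h1_def M_def D_def .
      moreover have "\<bar>x2 \<bullet> s - x0 \<bullet> s\<bar> \<le> h2"
        using geom_incl(2)[OF c g1 g2] unfolding s_def h2_def M_def D_def .
      ultimately have "g z = 1" using c unfolding g_def \<Psi>_def z s_def by simp
      thus ?thesis using TA by simp
    qed
  qed
  also have "integral\<^sup>N lborel g = (\<integral>\<^sup>+x0. \<integral>\<^sup>+x1. \<integral>\<^sup>+x2. \<integral>\<^sup>+x3. g (x0, x1, x2, x3) \<partial>lborel \<partial>lborel \<partial>lborel \<partial>lborel)"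
  proof -
    have "integral\<^sup>N lborel g = integral\<^sup>N (lborel \<Otimes>\<^sub>M (lborel :: ('a\<times>'a\<times>'a) measure)) g"
      by (simp only: lborel_prod)
    also have "\<dots> = (\<integral>\<^sup>+x0. \<integral>\<^sup>+y. g (x0, y) \<partial>lborel \<partial>lborel)"
      by (rule nn_fst) (use gm in \<open>simp only: lborel_prod\<close>)
    also have "\<dots> = (\<integral>\<^sup>+x0. \<integral>\<^sup>+x1. \<integral>\<^sup>+y. g (x0, x1, y) \<partial>lborel \<partial>lborel \<partial>lborel)"
    proof (rule nn_integral_cong)
      fix x0 :: 'a
      have m: "(\<lambda>y. g (x0, y)) \<in> borel_measurable (lborel \<Otimes>\<^sub>M (lborel \<Otimes>\<^sub>M lborel))"
        using gm by measurable
      have "(\<integral>\<^sup>+y. g (x0, y) \<partial>lborel) = integral\<^sup>N (lborel \<Otimes>\<^sub>M (lborel :: ('a\<times>'a) measure)) (\<lambda>y. g (x0, y))"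
        by (simp only: lborel_prod)
      also have "\<dots> = (\<integral>\<^sup>+x1. \<integral>\<^sup>+y. g (x0, x1, y) \<partial>lborel \<partial>lborel)"
        by (rule nn_fst[of "\<lambda>y. g (x0, y)", simplified]) (use m in \<open>simp only: lborel_prod\<close>)
      finally show "(\<integral>\<^sup>+y. g (x0, y) \<partial>lborel) = (\<integral>\<^sup>+x1. \<integral>\<^sup>+y. g (x0, x1, y) \<partial>lborel \<partial>lborel)" .
    qed
    also have "\<dots> = (\<integral>\<^sup>+x0. \<integral>\<^sup>+x1. \<integral>\<^sup>+x2. \<integral>\<^sup>+x3. g (x0, x1, x2, x3) \<partial>lborel \<partial>lborel \<partial>lborel \<partial>lborel)"
    proof (rule nn_integral_cong, rule nn_integral_cong)
      fix x0 x1 :: 'a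
      have m: "(\<lambda>y. g (x0, x1, y)) \<in> borel_measurable (lborel \<Otimes>\<^sub>M lborel)"
        using gm by measurable
      have "(\<integral>\<^sup>+y. g (x0, x1, y) \<partial>lborel) = integral\<^sup>N (lborel \<Otimes>\<^sub>M (lborel :: 'a measure)) (\<lambda>y. g (x0, x1, y))"
        by (simp only: lborel_prod)
      also have "\<dots> = (\<integral>\<^sup>+x2. \<integral>\<^sup>+x3. g (x0, x1, x2, x3) \<partial>lborel \<partial>lborel)"
        by (rule nn_fst[of "\<lambda>y. g (x0, x1, y)", simplified]) (rule m)
      finally show "(\<integral>\<^sup>+y. g (x0, x1, y) \<partial>lborel) = (\<integral>\<^sup>+x2. \<integral>\<^sup>+x3. g (x0, x1, x2, x3) \<partial>lborel \<partial>lborel)" .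
    qed
    finally show ?thesis .
  qed
  also have "\<dots> = (\<integral>\<^sup>+x0. \<integral>\<^sup>+x1. \<integral>\<^sup>+x2. \<integral>\<^sup>+s. \<Psi> (x0, x1, x2, s) \<partial>lborel \<partial>lborel \<partial>lborel \<partial>lborel)"
  proof (rule nn_integral_cong, rule nn_integral_cong, rule nn_integral_cong)
    fix x0 x1 x2 :: 'a
    have "(\<integral>\<^sup>+x3. g (x0, x1, x2, x3) \<partial>lborel) = (\<integral>\<^sup>+x3. (\<lambda>s. \<Psi> (x0, x1, x2, s)) ((x1 - x0 - x2) + x3) \<partial>lborel)"
      by (simp add: g_def)
    also have "\<dots> = (\<integral>\<^sup>+s. \<Psi> (x0, x1, x2, s) \<partial>lborel)"
      by (rule nn_transl) measurable
    finally show "(\<integral>\<^sup>+x3. g (x0, x1, x2, x3) \<partial>lborel) = (\<integral>\<^sup>+s. \<Psi> (x0, x1, x2, s) \<partial>lborel)" .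
  qed
  also have "\<dots> = (\<integral>\<^sup>+x0. \<integral>\<^sup>+s. \<integral>\<^sup>+x1. \<integral>\<^sup>+x2. \<Psi> (x0, x1, x2, s) \<partial>lborel \<partial>lborel \<partial>lborel \<partial>lborel)"
  proof (rule nn_integral_cong)
    fix x0 :: 'a
    have "(\<integral>\<^sup>+x1. \<integral>\<^sup>+x2. \<integral>\<^sup>+s. \<Psi> (x0, x1, x2, s) \<partial>lborel \<partial>lborel \<partial>lborel)
        = (\<integral>\<^sup>+x1. \<integral>\<^sup>+s. \<integral>\<^sup>+x2. \<Psi> (x0, x1, x2, s) \<partial>lborel \<partial>lborel \<partial>lborel)"
    proof (rule nn_integral_cong)
      fix x1 :: 'a
      show "(\<integral>\<^sup>+x2. \<integral>\<^sup>+s. \<Psi> (x0, x1, x2, s) \<partial>lborel \<partial>lborel) = (\<integral>\<^sup>+s. \<integral>\<^sup>+x2. \<Psi> (x0, x1, x2, s) \<partial>lborel \<partial>lborel)"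
        by (rule lborel_pair.Fubini'[symmetric]) measurable
    qed
    also have "\<dots> = (\<integral>\<^sup>+s. \<integral>\<^sup>+x1. \<integral>\<^sup>+x2. \<Psi> (x0, x1, x2, s) \<partial>lborel \<partial>lborel \<partial>lborel)"
      by (rule lborel_pair.Fubini'[symmetric]) measurable
    finally show "(\<integral>\<^sup>+x1. \<integral>\<^sup>+x2. \<integral>\<^sup>+s. \<Psi> (x0, x1, x2, s) \<partial>lborel \<partial>lborel \<partial>lborel)
        = (\<integral>\<^sup>+s. \<integral>\<^sup>+x1. \<integral>\<^sup>+x2. \<Psi> (x0, x1, x2, s) \<partial>lborel \<partial>lborel \<partial>lborel)" .
  qed
  also have "\<dots> \<le> (\<integral>\<^sup>+x0. indicator (cube r :: 'a set) x0 * (\<integral>\<^sup>+s. H s \<partial>lborel) \<partial>lborel)"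
  proof (rule nn_integral_mono)
    fix x0 :: 'a
    have "(\<integral>\<^sup>+s. \<integral>\<^sup>+x1. \<integral>\<^sup>+x2. \<Psi> (x0, x1, x2, s) \<partial>lborel \<partial>lborel \<partial>lborel)
        = (\<integral>\<^sup>+s. indicator (cube r) x0 * (indicator (cube (4*r)) s * (emeasure lborel (SA x0 s) * emeasure lborel (SB x0 s))) \<partial>lborel)"
    proof (rule nn_integral_cong)
      fix s :: 'a
      have SAm: "SA x0 s \<in> sets lborel" "SB x0 s \<in> sets lborel" by (simp_all add: SA_def SB_def)
      have "(\<integral>\<^sup>+x1. \<integral>\<^sup>+x2. \<Psi> (x0, x1, x2, s) \<partial>lborel \<partial>lborel)
          = (\<integral>\<^sup>+x1. (indicator (cube r) x0 * indicator (cube (4*r)) s * indicator (SA x0 s) x1) * emeasure lborel (SB x0 s) \<partial>lborel)"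
        unfolding \<Psi>eq by (rule nn_integral_cong, rule nn_integral_cmult_indicator, rule SAm(2))
      also have "\<dots> = (\<integral>\<^sup>+x1. (indicator (cube r) x0 * indicator (cube (4*r)) s) * indicator (SA x0 s) x1 \<partial>lborel) * emeasure lborel (SB x0 s)"
        by (rule nn_integral_multc) (use SAm in simp)
      also have "(\<integral>\<^sup>+x1. (indicator (cube r) x0 * indicator (cube (4*r)) s) * indicator (SA x0 s) x1 \<partial>lborel)
          = (indicator (cube r) x0 * indicator (cube (4*r)) s) * emeasure lborel (SA x0 s)"
        by (rule nn_integral_cmult_indicator, rule SAm(1))
      finally show "(\<integral>\<^sup>+x1. \<integral>\<^sup>+x2. \<Psi> (x0, x1, x2, s) \<partial>lborel \<partial>lborel)
          = indicator (cube r) x0 * (indicator (cube (4*r)) s * (emeasure lborel (SA x0 s) * emeasure lborel (SB x0 s)))"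
        by (simp add: ac_simps)
    qed
    also have "\<dots> \<le> (\<integral>\<^sup>+s. indicator (cube r) x0 * H s \<partial>lborel)"
    proof (rule nn_integral_mono, rule mult_left_mono)
      fix s :: 'a
      show "indicator (cube (4*r)) s * (emeasure lborel (SA x0 s) * emeasure lborel (SB x0 s)) \<le> H s"
        using sec_bound[OF r w \<sigma>1 \<sigma>2, of s x0]
        unfolding H_def SA_def SB_def h1_def h2_def P_def Q_def M_def D_def .
    qed simp
    also have "\<dots> = indicator (cube r) x0 * (\<integral>\<^sup>+s. H s \<partial>lborel)"
      by (rule nn_integral_cmult) (simp add: H_def)
    finally show "(\<integral>\<^sup>+s. \<integral>\<^sup>+x1. \<integral>\<^sup>+x2. \<Psi> (x0, x1, x2, s) \<partial>lborel \<partial>lborel \<partial>lborel)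
        \<le> indicator (cube r) x0 * (\<integral>\<^sup>+s. H s \<partial>lborel)" .
  qed
  also have "\<dots> = (\<integral>\<^sup>+s. H s \<partial>lborel) * emeasure lborel (cube r :: 'a set)"
    by (subst mult.commute) (rule nn_integral_cmult_indicator, simp)
  also have "(\<integral>\<^sup>+s. H s \<partial>lborel) = ennreal (P*(2*\<sigma>1)^D + Q/\<sigma>1\<^sup>2*(2*\<sigma>2)^D + Q/\<sigma>2\<^sup>2*(8*r)^D)"
  proof -
    have "(\<integral>\<^sup>+s. H s \<partial>lborel) = (\<integral>\<^sup>+s. ennreal P * indicator (cube \<sigma>1 :: 'a set) s + ennreal (Q / \<sigma>1\<^sup>2) * indicator (cube \<sigma>2 :: 'a set) s \<partial>lborel)
        + (\<integral>\<^sup>+s. ennreal (Q / \<sigma>2\<^sup>2) * indicator (cube (4*r) :: 'a set) s \<partial>lborel)"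
      unfolding H_def by (rule nn_integral_add) auto
    also have "(\<integral>\<^sup>+s. ennreal P * indicator (cube \<sigma>1 :: 'a set) s + ennreal (Q / \<sigma>1\<^sup>2) * indicator (cube \<sigma>2 :: 'a set) s \<partial>lborel)
        = (\<integral>\<^sup>+s. ennreal P * indicator (cube \<sigma>1 :: 'a set) s \<partial>lborel) + (\<integral>\<^sup>+s. ennreal (Q / \<sigma>1\<^sup>2) * indicator (cube \<sigma>2 :: 'a set) s \<partial>lborel)"
      by (rule nn_integral_add) auto
    also have "(\<integral>\<^sup>+s. ennreal P * indicator (cube \<sigma>1 :: 'a set) s \<partial>lborel) = ennreal P * ennreal ((2*\<sigma>1)^D)"
      using \<sigma>1 by (simp add: nn_integral_cmult_indicator emeasure_cube D_def)
    also have "(\<integral>\<^sup>+s. ennreal (Q / \<sigma>1\<^sup>2) * indicator (cube \<sigma>2 :: 'a set) s \<partial>lborel) = ennreal (Q / \<sigma>1\<^sup>2) * ennreal ((2*\<sigma>2)^D)"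
      using \<sigma>2 by (simp add: nn_integral_cmult_indicator emeasure_cube D_def)
    also have "(\<integral>\<^sup>+s. ennreal (Q / \<sigma>2\<^sup>2) * indicator (cube (4*r) :: 'a set) s \<partial>lborel) = ennreal (Q / \<sigma>2\<^sup>2) * ennreal ((8*r)^D)"
      using r by (simp add: nn_integral_cmult_indicator emeasure_cube D_def)
    finally show ?thesis
      using r \<sigma>1 \<sigma>2 Q0 P0 by (simp add: ennreal_mult''[symmetric] ennreal_plus[symmetric] del: ennreal_plus)
  qed
  also have "emeasure lborel (cube r :: 'a set) = ennreal ((2*r)^D)"
    using r by (simp add: emeasure_cube D_def)
  finally have fin: "emeasure lborel A \<le> ennreal (P*(2*\<sigma>1)^D + Q/\<sigma>1\<^sup>2*(2*\<sigma>2)^D + Q/\<sigma>2\<^sup>2*(8*r)^D) * ennreal ((2*r)^D)" .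
  have S0: "P*(2*\<sigma>1)^D + Q/\<sigma>1\<^sup>2*(2*\<sigma>2)^D + Q/\<sigma>2\<^sup>2*(8*r)^D \<ge> 0"
    using r \<sigma>1 \<sigma>2 Q0 P0 by (intro add_nonneg_nonneg mult_nonneg_nonneg divide_nonneg_pos) auto
  have "ennreal (P*(2*\<sigma>1)^D + Q/\<sigma>1\<^sup>2*(2*\<sigma>2)^D + Q/\<sigma>2\<^sup>2*(8*r)^D) * ennreal ((2*r)^D)
      = ennreal ((2*r)^D * (P*(2*\<sigma>1)^D + Q/\<sigma>1\<^sup>2*(2*\<sigma>2)^D + Q/\<sigma>2\<^sup>2*(8*r)^D))"
    by (subst mult.commute, rule ennreal_mult[symmetric]) (use r S0 in auto)
  with fin show ?thesis by simp
qed

lemma final_ineq: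
  fixes r z :: real and d :: nat
  assumes d: "d \<ge> 2" and r: "r \<ge> 1" and z0: "z > 0" and z1: "z \<le> 1"
  defines "w \<equiv> 2 * z^110" and "\<sigma>1 \<equiv> z^66 / 2" and "\<sigma>2 \<equiv> z^48 / 2"
  defines "M \<equiv> 2 * real d * r"
  defines "P \<equiv> (2*r)^d * (2*r)^d"
  defines "Q \<equiv> ((2*r)^(d-1) * (2*(w*M)*real d)) * ((2*r)^(d-1) * (2*(2*w*M)*real d))"
  shows "(2*r)^d * (P*(2*\<sigma>1)^d + Q/\<sigma>1\<^sup>2*(2*\<sigma>2)^d + Q/\<sigma>2\<^sup>2*(8*r)^d) \<le> 257 * (8*real d*r)^(4*d+2) * z^124"
proof -
  define R where "R = 8 * real d * r"
  define A where "A = (2*r)^(d-1)"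
  define X where "X = M\<^sup>2 * (real d)\<^sup>2 * A\<^sup>2"
  have dR: "real d \<ge> 2" using d by simp
  have dr1: "real d * r \<ge> 2 * r" using mult_right_mono[OF dR, of r] r by simp
  have dr2: "real d * r \<ge> real d" using mult_left_mono[OF r, of "real d"] by simp
  have R1: "R \<ge> 1" unfolding R_def using dr1 r by linarith
  have R0: "R \<ge> 0" using R1 by simp
  have r2R: "2 * r \<le> R" unfolding R_def using dr1 dr2 r by linarith
  have r8R: "8 * r \<le> R" unfolding R_def using dr1 dr2 r by linarith
  have MR: "M \<le> R" unfolding R_def M_def using dr1 dr2 r by linarith
  have dRR: "real d \<le> R" unfolding R_def using dr1 dr2 r by linarith
  have M0: "M \<ge> 0" unfolding M_def using r by simp
  have A0: "A \<ge> 0" unfolding A_def using r by simp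
  have AR: "A \<le> R^(d-1)" unfolding A_def using r r2R by (intro power_mono) auto
  have X0: "X \<ge> 0" unfolding X_def by simp
  have XR: "X \<le> R^(2*d+2)"
  proof -
    have "X \<le> R\<^sup>2 * R\<^sup>2 * (R^(d-1))\<^sup>2" unfolding X_def
      using MR dRR AR M0 A0 r dR by (intro mult_mono power_mono) auto
    also have "\<dots> = R^(2*d+2)" using d
      by (simp add: power_mult[symmetric] power_add[symmetric] mult.commute) (simp add: algebra_simps)
    finally show ?thesis .
  qed
  have zne: "z \<noteq> 0" using z0 by simp
  have Qe: "Q = 32 * X * z^220"
  proof -
    have "Q = 8 * w\<^sup>2 * X" unfolding Q_def X_def A_def by (simp add: power2_eq_square algebra_simps)
    moreover have "w\<^sup>2 = 4 * z^220" unfolding w_def by (simp add: power_mult_distrib flip: power_mult)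
    ultimately show ?thesis by simp
  qed
  have Q1: "Q / \<sigma>1\<^sup>2 = 128 * X * z^88"
  proof -
    have e: "\<sigma>1\<^sup>2 = z^132 / 4" unfolding \<sigma>1_def by (simp add: power_divide flip: power_mult)
    have "Q / \<sigma>1\<^sup>2 = (32 * X * z^220) / (z^132 / 4)" by (simp only: Qe e)
    also have "\<dots> = 128 * X * (z^220 / z^132)" by (simp add: divide_divide_eq_right)
    also have "z^220 / z^132 = z^88" using power_diff[OF zne, of 132 220] by simp
    finally show ?thesis .
  qed
  have Q2: "Q / \<sigma>2\<^sup>2 = 128 * X * z^124"
  proof -
    have e: "\<sigma>2\<^sup>2 = z^96 / 4" unfolding \<sigma>2_def by (simp add: power_divide flip: power_mult)
    have "Q / \<sigma>2\<^sup>2 = (32 * X * z^220) / (z^96 / 4)" by (simp only: Qe e)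
    also have "\<dots> = 128 * X * (z^220 / z^96)" by (simp add: divide_divide_eq_right)
    also have "z^220 / z^96 = z^124" using power_diff[OF zne, of 96 220] by simp
    finally show ?thesis .
  qed
  have s1: "(2*\<sigma>1)^d \<le> z^132"
  proof -
    have "(2*\<sigma>1)^d = (z^66)^d" by (simp add: \<sigma>1_def)
    also have "\<dots> \<le> (z^66)^2" using z0 z1 d by (intro power_decreasing) (auto simp: power_le_one)
    finally show ?thesis by (simp flip: power_mult)
  qed
  have s2: "(2*\<sigma>2)^d \<le> z^96"
  proof -
    have "(2*\<sigma>2)^d = (z^48)^d" by (simp add: \<sigma>2_def)
    also have "\<dots> \<le> (z^48)^2" using z0 z1 d by (intro power_decreasing) (auto simp: power_le_one)
    finally show ?thesis by (simp flip: power_mult)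
  qed
  have sg: "\<sigma>1 \<ge> 0" "\<sigma>2 \<ge> 0" unfolding \<sigma>1_def \<sigma>2_def using z0 by simp_all
  have zmono: "z^a \<le> z^b" if "b \<le> a" for a b using z0 z1 that by (intro power_decreasing) auto
  have Rmono: "R^a \<le> R^b" if "a \<le> b" for a b using R1 that by (intro power_increasing) auto
  have P0: "P \<ge> 0" unfolding P_def using r by simp
  have PR: "P \<le> R^(2*d)"
  proof -
    have "P \<le> R^d * R^d" unfolding P_def using r r2R by (intro mult_mono power_mono) auto
    also have "R^d * R^d = R^(2*d)" by (metis mult_2 power_add)
    finally show ?thesis .
  qed
  have T1: "P*(2*\<sigma>1)^d \<le> R^(3*d+2) * z^124"
  proof -
    have "P*(2*\<sigma>1)^d \<le> R^(2*d) * z^132" using PR s1 P0 R0 sg by (intro mult_mono) auto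
    also have "\<dots> \<le> R^(3*d+2) * z^124" using Rmono[of "2*d" "3*d+2"] zmono[of 124 132] R0 z0
      by (intro mult_mono) auto
    finally show ?thesis .
  qed
  have T2: "Q/\<sigma>1\<^sup>2*(2*\<sigma>2)^d \<le> 128 * R^(3*d+2) * z^124"
  proof -
    have "Q/\<sigma>1\<^sup>2*(2*\<sigma>2)^d = 128 * X * (z^88 * (2*\<sigma>2)^d)" unfolding Q1 by simp
    also have "\<dots> \<le> 128 * R^(3*d+2) * (z^88 * z^96)"
      using XR Rmono[of "2*d+2" "3*d+2"] s2 X0 z0 by (intro mult_mono mult_left_mono) (auto simp: \<sigma>2_def)
    also have "z^88 * z^96 = z^184" by (simp flip: power_add)
    also have "128 * R^(3*d+2) * z^184 \<le> 128 * R^(3*d+2) * z^124"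
      using zmono[of 124 184] R0 by (intro mult_left_mono) auto
    finally show ?thesis .
  qed
  have T3: "Q/\<sigma>2\<^sup>2*(8*r)^d \<le> 128 * R^(3*d+2) * z^124"
  proof -
    have "Q/\<sigma>2\<^sup>2*(8*r)^d = 128 * (X * (8*r)^d) * z^124" unfolding Q2 by simp
    also have "\<dots> \<le> 128 * (R^(2*d+2) * R^d) * z^124"
      using XR X0 r r8R z0 by (intro mult_mono mult_left_mono power_mono) auto
    also have "R^(2*d+2) * R^d = R^(3*d+2)" by (simp flip: power_add)
    finally show ?thesis by simp
  qed
  have Q0: "Q \<ge> 0" unfolding Qe using X0 z0 by simp
  have sum: "P*(2*\<sigma>1)^d + Q/\<sigma>1\<^sup>2*(2*\<sigma>2)^d + Q/\<sigma>2\<^sup>2*(8*r)^d \<le> 257 * R^(3*d+2) * z^124"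
    using T1 T2 T3 by linarith
  have sum0: "0 \<le> P*(2*\<sigma>1)^d + Q/\<sigma>1\<^sup>2*(2*\<sigma>2)^d + Q/\<sigma>2\<^sup>2*(8*r)^d"
    using P0 Q0 sg r by (intro add_nonneg_nonneg mult_nonneg_nonneg divide_nonneg_nonneg) auto
  have "(2*r)^d * (P*(2*\<sigma>1)^d + Q/\<sigma>1\<^sup>2*(2*\<sigma>2)^d + Q/\<sigma>2\<^sup>2*(8*r)^d)
      \<le> R^d * (257 * R^(3*d+2) * z^124)"
    using sum sum0 r r2R R0 by (intro mult_mono power_mono) auto
  also have "\<dots> = 257 * R^(4*d+2) * z^124" by (simp add: power_add[symmetric] algebra_simps)
  finally show ?thesis unfolding R_def .
qed

lemma cube_cart: "cube r = {x::real^'n. \<forall>i. \<bar>x $ i\<bar> \<le> r}"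
  unfolding cube_def by (fastforce simp: Basis_vec_def cart_eq_inner_axis)

lemma cubeW_eq: "cube_W (s_plus CARD('n) n) = (cube (3 * (ln (real n))\<^sup>2) :: (real^'n) set)"
proof -
  have "root CARD('n) (s_plus CARD('n) n) = 3 * s_seq n"
    unfolding s_plus_def s_seq_def by (rule real_root_power_cancel) auto
  thus ?thesis unfolding cube_W_def cube_cart by (simp add: s_seq_def)
qed

lemma ln_le_powr: "x > 0 \<Longrightarrow> a > 0 \<Longrightarrow> ln x \<le> x powr a / a" for x a :: real
proof -
  assume x: "x > 0" and a: "a > 0"
  have "ln (x powr a) \<le> x powr a - 1" using x by (intro ln_le_minus_one) simp
  hence "a * ln x \<le> x powr a" using x by simp
  thus ?thesis using a by (simp add: field_simps)
qed

theorem mainTheorem9: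
  assumes "CARD('n::finite) \<ge> 2"
  shows "\<exists>\<epsilon>0>0. \<forall>\<epsilon>. 0 < \<epsilon> \<and> \<epsilon> < \<epsilon>0 \<longrightarrow>
    (\<lambda>n. measure lborel (bad_set n \<epsilon> :: ((real^'n) \<times> (real^'n) \<times> (real^'n) \<times> (real^'n)) set))
      \<in> O(\<lambda>n. 1 / real n)"
proof (intro exI[of _ "1/12"] conjI allI impI)
  fix \<epsilon> :: real
  assume "0 < \<epsilon> \<and> \<epsilon> < 1/12"
  hence \<epsilon>: "0 < \<epsilon>" "\<epsilon> < 1/12" by auto
  define d where "d = CARD('n)"
  have d2: "d \<ge> 2" using assms by (simp add: d_def)
  define k where "k = 8 * d + 4"
  define C where "C = 257 * (24 * real d)^(4*d+2) * (40 * real k)^k"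
  show "(\<lambda>n. measure lborel (bad_set n \<epsilon> :: ((real^'n) \<times> (real^'n) \<times> (real^'n) \<times> (real^'n)) set))
      \<in> O(\<lambda>n. 1 / real n)"
  proof (rule bigoI[where c = C])
    show "\<forall>\<^sub>F n in sequentially. norm (measure lborel (bad_set n \<epsilon> :: ((real^'n) \<times> (real^'n) \<times> (real^'n) \<times> (real^'n)) set))
        \<le> C * norm (1 / real n)"
      unfolding eventually_sequentially
    proof (intro exI[of _ 3] allI impI)
      fix n :: nat assume n3: "3 \<le> n"
      define x where "x = real n"
      have x3: "x \<ge> 3" using n3 by (simp add: x_def)
      have x0: "x > 0" using x3 by simp
      define L where "L = ln x"
      have L1: "L \<ge> 1"
      proof -
        have "exp 1 \<le> x" using exp_le x3 by linarith
        hence "ln (exp 1) \<le> ln x" using x0 by (subst ln_le_cancel_iff) auto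
        thus ?thesis by (simp add: L_def)
      qed
      define r where "r = 3 * L\<^sup>2"
      have r1: "r \<ge> 1" unfolding r_def using one_le_power[OF L1, of 2] by linarith
      define z where "z = x powr (-1/120)"
      have z0: "z > 0" using x0 by (simp add: z_def)
      have z1: "z \<le> 1"
      proof -
        have "x powr (-1/120) \<le> x powr 0" using x3 by (intro powr_mono) auto
        thus ?thesis using x0 by (simp add: z_def)
      qed
      have zpow: "z^m = x powr (- real m / 120)" for m :: nat
        unfolding z_def using x0 by (simp add: powr_power)
      define w where "w = 2 * z^110"
      define \<sigma>1 where "\<sigma>1 = z^66 / 2"
      define \<sigma>2 where "\<sigma>2 = z^48 / 2"
      define M where "M = 2 * real d * r"
      define P where "P = (2*r)^d * (2*r)^d"
      define Q where "Q = ((2*r)^(d-1) * (2*(w*M)*real d)) * ((2*r)^(d-1) * (2*(2*w*M)*real d))"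
      define B where "B = (2*r)^d * (P*(2*\<sigma>1)^d + Q/\<sigma>1\<^sup>2*(2*\<sigma>2)^d + Q/\<sigma>2\<^sup>2*(8*r)^d)"
      have cW: "cube_W (s_plus CARD('n) n) = (cube r :: (real^'n) set)"
        unfolding cubeW_eq r_def L_def x_def ..
      have \<delta>: "real n powr (-1 + \<epsilon>) \<le> z^110"
      proof -
        have "x powr (-1 + \<epsilon>) \<le> x powr (- real (110::nat) / 120)" using x3 \<epsilon> by (intro powr_mono) auto
        thus ?thesis by (simp add: zpow x_def)
      qed
      have sub: "(bad_set n \<epsilon> :: ((real^'n) \<times> (real^'n) \<times> (real^'n) \<times> (real^'n)) set) \<subseteq>
         {(x0, x1, x2, x3). x0 \<in> cube r \<and> x1 \<in> cube r \<and> x2 \<in> cube r \<and> x3 \<in> cube r \<and>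
           \<bar>norm (x2 - x3) - norm (x0 - x1)\<bar> \<le> w \<and> \<bar>norm (x0 - x3) - norm (x1 - x2)\<bar> \<le> w}"
      proof (clarify)
        fix x0 x1 x2 x3 :: "real^'n"
        assume "(x0, x1, x2, x3) \<in> bad_set n \<epsilon>"
        hence c: "x0 \<in> cube r" "x1 \<in> cube r" "x2 \<in> cube r" "x3 \<in> cube r"
          and m: "max \<bar>halfdist x2 x3 - halfdist x0 x1\<bar> \<bar>halfdist x0 x3 - halfdist x1 x2\<bar> \<le> real n powr (-1 + \<epsilon>)"
          unfolding bad_set_def cW by auto
        have "\<bar>norm (x2 - x3) / 2 - norm (x0 - x1) / 2\<bar> \<le> z^110"
             "\<bar>norm (x0 - x3) / 2 - norm (x1 - x2) / 2\<bar> \<le> z^110"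
          using m \<delta> unfolding halfdist_def by auto
        hence "\<bar>norm (x2 - x3) - norm (x0 - x1)\<bar> \<le> w" "\<bar>norm (x0 - x3) - norm (x1 - x2)\<bar> \<le> w"
          unfolding w_def by (simp_all add: abs_le_iff)
        thus "x0 \<in> cube r \<and> x1 \<in> cube r \<and> x2 \<in> cube r \<and> x3 \<in> cube r \<and>
           \<bar>norm (x2 - x3) - norm (x0 - x1)\<bar> \<le> w \<and> \<bar>norm (x0 - x3) - norm (x1 - x2)\<bar> \<le> w"
          using c by simp
      qed
      have em: "emeasure lborel (bad_set n \<epsilon> :: ((real^'n) \<times> (real^'n) \<times> (real^'n) \<times> (real^'n)) set) \<le> ennreal B"
        using main_geom[OF _ _ _ _ sub, of \<sigma>1 \<sigma>2] r1 z0
        unfolding B_def P_def Q_def M_def d_def w_def \<sigma>1_def \<sigma>2_def by simp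
      have B0: "B \<ge> 0" unfolding B_def P_def Q_def M_def w_def \<sigma>1_def \<sigma>2_def using r1 z0
        by (intro mult_nonneg_nonneg add_nonneg_nonneg divide_nonneg_nonneg) auto
      have meas: "measure lborel (bad_set n \<epsilon> :: ((real^'n) \<times> (real^'n) \<times> (real^'n) \<times> (real^'n)) set) \<le> B"
        unfolding measure_def using em B0 by (intro enn2real_leI) auto
      have B1: "B \<le> 257 * (8*real d*r)^(4*d+2) * z^124"
        unfolding B_def P_def Q_def M_def w_def \<sigma>1_def \<sigma>2_def using final_ineq[OF d2 r1 z0 z1] by simp
      define a where "a = 1 / (40 * real k)"
      have k0: "real k > 0" by (simp add: k_def)
      have a0: "a > 0" using k0 by (simp add: a_def)
      have e8: "8*real d*r = (24 * real d) * L\<^sup>2" by (simp add: r_def)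
      have "(8*real d*r)^(4*d+2) = ((24 * real d) * L\<^sup>2)^(4*d+2)" by (simp only: e8)
      also have "\<dots> = (24 * real d)^(4*d+2) * (L\<^sup>2)^(4*d+2)" by (simp add: power_mult_distrib)
      also have "(L\<^sup>2)^(4*d+2) = L^k"
      proof -
        have "(L\<^sup>2)^(4*d+2) = L^(2*(4*d+2))" by (simp only: power_mult)
        moreover have "2*(4*d+2) = k" by (simp add: k_def)
        ultimately show ?thesis by (simp only:)
      qed
      also have "L^k \<le> (x powr a / a)^k"
        using L1 ln_le_powr[OF x0 a0] by (intro power_mono) (auto simp: L_def)
      also have "(x powr a / a)^k = x powr (real k * a) * (40 * real k)^k"
        using x0 by (simp add: power_divide powr_power a_def field_simps)
      also have "x powr (real k * a) = x powr (1/40)" using k0 by (simp add: a_def)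
      finally have R: "(8*real d*r)^(4*d+2) \<le> (24 * real d)^(4*d+2) * (x powr (1/40) * (40 * real k)^k)"
        by (simp add: mult_left_mono)
      have "B \<le> 257 * ((24 * real d)^(4*d+2) * (x powr (1/40) * (40 * real k)^k)) * z^124"
        using B1 R z0 by (smt (verit, best) mult_left_mono mult_right_mono zero_le_power)
      also have "\<dots> = C * (x powr (1/40) * x powr (- real (124::nat) / 120))"
        unfolding C_def zpow by (simp add: algebra_simps)
      also have "x powr (1/40) * x powr (- real (124::nat) / 120) = x powr (-121/120)"
        by (simp add: powr_add[symmetric])
      also have "x powr (-121/120) \<le> x powr (-1)" using x3 by (intro powr_mono) auto
      finally have "B \<le> C * x powr (-1)"
        using C_def by (simp add: mult_left_mono)
      hence "B \<le> C * (1 / x)" using x0 by (simp add: powr_minus_divide)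
      thus "norm (measure lborel (bad_set n \<epsilon> :: ((real^'n) \<times> (real^'n) \<times> (real^'n) \<times> (real^'n)) set))
        \<le> C * norm (1 / real n)"
        using meas x0 by (simp add: x_def)
    qed
  qed
qed simp

end
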